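(* Let $q\in\mathbb{C}[x_0,x_1,x_2]_2$ be a nondegenerate quadratic form in three variables. Then $q^3$ has rank $11$, i.e. the minimal $r$ such that $q^3=\sum_{i=1}^r l_i^6$ with $l_i$ linear forms equals $11$.
   Context: The rank (Waring rank) of a form is the minimal number of powers of linear forms summing to it; equivalently (apolarity lemma) the minimal length of a smooth finite subscheme of $\mathbb{P}^2$ whose ideal annihilates the form under the differentiation action of $\mathbb{C}[y_0,y_1,y_2]$. *)

theory Defs
  imports "HOL-Analysis.Analysis"
begin

(* Forms on C^3 are represented as polynomial functions complex^3 => complex;
   over the infinite field C, equality of polynomials equals equality of the
   associated functions. *)

definition linear_form :: "complex^3 \<Rightarrow> complex^3 \<Rightarrow> complex" where
  "linear_form c x = (\<Sum>j\<in>UNIV. c $ j * x $ j)"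

definition quadratic_form :: "complex^3^3 \<Rightarrow> complex^3 \<Rightarrow> complex" where
  "quadratic_form A x = (\<Sum>i\<in>UNIV. \<Sum>j\<in>UNIV. A $ i $ j * x $ i * x $ j)"

definition waring_rank :: "nat \<Rightarrow> (complex^3 \<Rightarrow> complex) \<Rightarrow> nat" where
  "waring_rank d f = (LEAST r. \<exists>l :: nat \<Rightarrow> complex^3.
      \<forall>x. f x = (\<Sum>i<r. (linear_form (l i) x) ^ d))"

end

theory Submission
  imports Defs
begin

abbreviation lf where "lf \<equiv> linear_form"

lemma lf3: "linear_form c x = c$1*x$1 + c$2*x$2 + c$3*x$3"
  by (simp add: linear_form_def sum_3)

lemma lfv: "linear_form (vector [p,q,r]) y = p*y$1 + q*y$2 + r*y$3"
  by (simp add: lf3 vector_3)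

lemma lf_comm: "lf u v = lf v u"
  by (simp add: lf3 mult.commute)

lemma lf_add1: "lf (u + w) x = lf u x + lf w x"
  by (simp add: lf3 algebra_simps)
lemma lf_add2: "lf x (u + w) = lf x u + lf x w"
  by (simp add: lf3 algebra_simps)
lemma lf_sm1: "lf (t *s u) x = t * lf u x"
  by (simp add: lf3 algebra_simps)
lemma lf_sm2: "lf x (t *s u) = t * lf x u"
  by (simp add: lf3 algebra_simps)
lemma lf_zero: "lf 0 x = 0"
  by (simp add: lf3)

lemma extract3:
  fixes \<alpha> \<beta> :: "nat \<Rightarrow> complex" and A B C :: complex
  assumes h: "\<forall>t. (A + 2*t*B + t^2*C)^3 = (\<Sum>j<n. (\<alpha> j + t*\<beta> j)^6)"
  shows "(\<Sum>j<n. (\<alpha> j)^3 * (\<beta> j)^3) = (12*A*B*C + 8*B^3)/20"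
proof -
  have e: "960*((\<alpha> j)^3 * (\<beta> j)^3) = (\<alpha> j + (-3)*\<beta> j)^6 - 8*(\<alpha> j + (-2)*\<beta> j)^6
     + 13*(\<alpha> j + (-1)*\<beta> j)^6 - 13*(\<alpha> j + 1*\<beta> j)^6 + 8*(\<alpha> j + 2*\<beta> j)^6
     - (\<alpha> j + 3*\<beta> j)^6" for j
    by algebra
  have "960 * (\<Sum>j<n. (\<alpha> j)^3 * (\<beta> j)^3) = (\<Sum>j<n. 960*((\<alpha> j)^3 * (\<beta> j)^3))"
    by (simp add: sum_distrib_left)
  also have "\<dots> = (\<Sum>j<n. (\<alpha> j + (-3)*\<beta> j)^6) - 8*(\<Sum>j<n. (\<alpha> j + (-2)*\<beta> j)^6)
     + 13*(\<Sum>j<n. (\<alpha> j + (-1)*\<beta> j)^6) - 13*(\<Sum>j<n. (\<alpha> j + 1*\<beta> j)^6)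
     + 8*(\<Sum>j<n. (\<alpha> j + 2*\<beta> j)^6) - (\<Sum>j<n. (\<alpha> j + 3*\<beta> j)^6)"
    unfolding e by (simp only: sum.distrib sum_subtractf sum_distrib_left)
  also have "\<dots> = (A + 2*(-3)*B + (-3)^2*C)^3 - 8*(A + 2*(-2)*B + (-2)^2*C)^3
     + 13*(A + 2*(-1)*B + (-1)^2*C)^3 - 13*(A + 2*1*B + 1^2*C)^3
     + 8*(A + 2*2*B + 2^2*C)^3 - (A + 2*3*B + 3^2*C)^3"
    by (simp only: h[rule_format, symmetric])
  also have "\<dots> = 48*(12*A*B*C + 8*B^3)" by (simp add: power2_eq_square power3_eq_cube algebra_simps)
  finally have X: "960 * (\<Sum>j<n. (\<alpha> j)^3 * (\<beta> j)^3) = 48*(12*A*B*C + 8*B^3)" .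
  have "(\<Sum>j<n. (\<alpha> j)^3 * (\<beta> j)^3) = (960 * (\<Sum>j<n. (\<alpha> j)^3 * (\<beta> j)^3))/960" by simp
  also have "\<dots> = 48*(12*A*B*C + 8*B^3)/960" by (simp only: X)
  also have "\<dots> = (12*A*B*C + 8*B^3)/20" by simp
  finally show ?thesis .
qed

definition Rf :: "complex^3 \<Rightarrow> complex^3 \<Rightarrow> complex" where
  "Rf u v = 1/5 * lf u v * (3 * lf u u * lf v v + 2 * (lf u v)^2)"

lemma star:
  fixes b :: "nat \<Rightarrow> complex^3"
  assumes H: "\<forall>x. (lf x x)^3 = (\<Sum>j<n. (lf (b j) x)^6)"
  shows "(\<Sum>j<n. (lf u (b j))^3 * (lf v (b j))^3) = Rf u v"
proof -
  have "\<forall>t. (lf u u + 2*t*lf u v + t^2*lf v v)^3 = (\<Sum>j<n. (lf u (b j) + t*lf v (b j))^6)"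
  proof
    fix t :: complex
    have "lf (u + t *s v) (u + t *s v) = lf u u + 2*t*lf u v + t^2*lf v v"
      by (simp add: lf_add1 lf_add2 lf_sm1 lf_sm2 lf_comm[of v u] algebra_simps power2_eq_square)
    moreover have "lf (b j) (u + t *s v) = lf u (b j) + t*lf v (b j)" for j
      by (simp add: lf_add2 lf_sm2 lf_comm)
    ultimately show "(lf u u + 2*t*lf u v + t^2*lf v v)^3 = (\<Sum>j<n. (lf u (b j) + t*lf v (b j))^6)"
      using H[rule_format, of "u + t *s v"] by simp
  qed
  from extract3[OF this] show ?thesis unfolding Rf_def by (simp add: field_simps) algebra?
qed

lemma lf_diff1: "lf (u - w) x = lf u x - lf w x"
  by (simp add: lf3 algebra_simps)

lemma cubeid:
  fixes p q r s w :: complex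
  shows "(p^2 + q^2 + r^2) * s * w = ((p + s)^3 * w - (p - s)^3 * w + (q + s)^3 * w
     - (q - s)^3 * w + (r + s)^3 * w - (r - s)^3 * w)/6 - s^3 * w"
  by algebra

lemma trip:
  fixes b :: "nat \<Rightarrow> complex^3"
  assumes H: "\<forall>x. (lf x x)^3 = (\<Sum>j<n. (lf (b j) x)^6)"
  shows "(\<Sum>j<n. lf (b j) (b j) * lf a (b j) * (lf v (b j))^3) = 7/5 * lf a v * lf v v"
proof -
  define E1 :: "complex^3" where "E1 = vector [1,0,0]"
  define E2 :: "complex^3" where "E2 = vector [0,1,0]"
  define E3 :: "complex^3" where "E3 = vector [0,0,1]"
  have p: "lf x x * lf a x * w = ((lf (E1+a) x)^3 * w - (lf (E1-a) x)^3 * w + (lf (E2+a) x)^3 * w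
     - (lf (E2-a) x)^3 * w + (lf (E3+a) x)^3 * w - (lf (E3-a) x)^3 * w)/6 - (lf a x)^3 * w" for x w
  proof -
    have "lf (E1+a) x = x$1 + lf a x" "lf (E1-a) x = x$1 - lf a x"
         "lf (E2+a) x = x$2 + lf a x" "lf (E2-a) x = x$2 - lf a x"
         "lf (E3+a) x = x$3 + lf a x" "lf (E3-a) x = x$3 - lf a x"
      by (simp_all add: lf_add1 lf_diff1 E1_def E2_def E3_def lfv)
    moreover have "lf x x = (x$1)^2 + (x$2)^2 + (x$3)^2" by (simp add: lf3 power2_eq_square)
    ultimately show ?thesis by (simp only:) (rule cubeid)
  qed
  have "(\<Sum>j<n. lf (b j) (b j) * lf a (b j) * (lf v (b j))^3) =
    ((\<Sum>j<n. (lf (E1+a) (b j))^3 * (lf v (b j))^3) - (\<Sum>j<n. (lf (E1-a) (b j))^3 * (lf v (b j))^3)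
    + (\<Sum>j<n. (lf (E2+a) (b j))^3 * (lf v (b j))^3) - (\<Sum>j<n. (lf (E2-a) (b j))^3 * (lf v (b j))^3)
    + (\<Sum>j<n. (lf (E3+a) (b j))^3 * (lf v (b j))^3) - (\<Sum>j<n. (lf (E3-a) (b j))^3 * (lf v (b j))^3))/6
    - (\<Sum>j<n. (lf a (b j))^3 * (lf v (b j))^3)"
    unfolding p by (simp only: sum.distrib sum_subtractf sum_divide_distrib[symmetric])
  also have "\<dots> = (Rf (E1+a) v - Rf (E1-a) v + Rf (E2+a) v - Rf (E2-a) v + Rf (E3+a) v - Rf (E3-a) v)/6
     - Rf a v"
    by (simp only: star[OF H])
  also have "\<dots> = 7/5 * lf a v * lf v v"
    unfolding Rf_def by (simp add: E1_def E2_def E3_def lf_add1 lf_add2 lf_diff1 lf3 vector_3 algebra_simps) algebra?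
  finally show ?thesis .
qed

lemma dstar:
  fixes b :: "nat \<Rightarrow> complex^3"
  assumes H: "\<forall>x. (lf x x)^3 = (\<Sum>j<n. (lf (b j) x)^6)"
  shows "(\<Sum>j<n. (7*(lf a (b j))^3 - 3*lf a a * lf (b j) (b j) * lf a (b j)) * (lf v (b j))^3)
     = 14/5 * (lf v a)^3"
proof -
  have "(\<Sum>j<n. (7*(lf a (b j))^3 - 3*lf a a * lf (b j) (b j) * lf a (b j)) * (lf v (b j))^3)
     = 7 * (\<Sum>j<n. (lf a (b j))^3 * (lf v (b j))^3)
       - 3 * lf a a * (\<Sum>j<n. lf (b j) (b j) * lf a (b j) * (lf v (b j))^3)"
    by (simp add: sum_subtractf sum_distrib_left algebra_simps)
  also have "\<dots> = 7 * Rf a v - 3 * lf a a * (7/5 * lf a v * lf v v)"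
    by (simp only: star[OF H] trip[OF H])
  also have "\<dots> = 14/5 * (lf v a)^3"
    unfolding Rf_def by (simp add: lf_comm[of v a] algebra_simps power2_eq_square power3_eq_cube)
  finally show ?thesis .
qed


lemma square_inv:
  fixes Y Z :: "nat \<Rightarrow> nat \<Rightarrow> complex"
  assumes YZ: "\<forall>i<10. \<forall>k<10. (\<Sum>j<10. Y i j * Z j k) = (if i = k then 1 else 0)"
  shows "\<forall>i<10. \<forall>k<10. (\<Sum>j<10. Z i j * Y j k) = (if i = k then 1 else 0)"
proof -
  have "card (UNIV :: 10 set) = 10" by simp
  then obtain h :: "nat \<Rightarrow> 10" where h: "bij_betw h {0..<10} UNIV"
    using ex_bij_betw_nat_finite[of "UNIV :: 10 set"] by auto
  define g where "g = inv_into {0..<10} h"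
  have gh: "g (h i) = i" if "i < 10" for i
    using h that unfolding g_def by (simp add: bij_betw_def inv_into_f_f)
  have hg: "h (g k) = k" for k
    using h unfolding g_def by (simp add: bij_betw_def f_inv_into_f)
  have g10: "g k < 10" for k
    using h unfolding g_def by (metis atLeastLessThan_iff bij_betw_def inv_into_into UNIV_I)
  have ginj: "g i = g k \<Longrightarrow> i = k" for i k by (metis hg)
  have reidx: "(\<Sum>j\<in>UNIV. F (g j)) = (\<Sum>j<10. F j)" for F :: "nat \<Rightarrow> complex"
  proof -
    have "(\<Sum>j\<in>UNIV. F (g j)) = (\<Sum>x\<in>{0..<10}. F (g (h x)))"
      using sum.reindex_bij_betw[OF h, of "\<lambda>j. F (g j)"] by simp
    also have "\<dots> = (\<Sum>x\<in>{0..<10}. F x)" by (rule sum.cong) (auto simp: gh)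
    finally show ?thesis by (simp add: atLeast0LessThan)
  qed
  define Ym :: "complex^10^10" where "Ym = (\<chi> i k. Y (g i) (g k))"
  define Zm :: "complex^10^10" where "Zm = (\<chi> i k. Z (g i) (g k))"
  have "Ym ** Zm = mat 1"
  proof -
    have "(Ym ** Zm) $ i $ k = mat 1 $ i $ k" for i k
    proof -
      have "(Ym ** Zm) $ i $ k = (\<Sum>j\<in>UNIV. Y (g i) (g j) * Z (g j) (g k))"
        by (simp add: Ym_def Zm_def matrix_matrix_mult_def)
      also have "\<dots> = (\<Sum>j<10. Y (g i) j * Z j (g k))" by (rule reidx)
      also have "\<dots> = (if g i = g k then 1 else 0)" using YZ g10 by simp
      also have "\<dots> = mat 1 $ i $ k" using ginj by (auto simp: mat_def)
      finally show ?thesis .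
    qed
    then show ?thesis by (simp add: vec_eq_iff)
  qed
  then have ZY: "Zm ** Ym = mat 1" by (rule matrix_left_right_inverse1)
  show ?thesis
  proof (intro allI impI)
    fix i k :: nat assume i: "i < 10" and k: "k < 10"
    have "(\<Sum>j<10. Z i j * Y j k) = (\<Sum>j\<in>UNIV. Z (g (h i)) (g j) * Y (g j) (g (h k)))"
      using reidx[of "\<lambda>j. Z (g (h i)) j * Y j (g (h k))"] by (simp add: gh i k)
    also have "\<dots> = (Zm ** Ym) $ h i $ h k"
      by (simp add: Ym_def Zm_def matrix_matrix_mult_def)
    also have "\<dots> = (if i = k then 1 else 0)"
      using ZY gh i k by (auto simp: mat_def) (metis)
    finally show "(\<Sum>j<10. Z i j * Y j k) = (if i = k then 1 else 0)" .
  qed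
qed
lemma L10: "{..<10::nat} = {0,1,2,3,4,5,6,7,8,9}"
  by (simp add: lessThan_Suc eval_nat_numeral insert_commute)
lemma all10: "(\<forall>k<10::nat. P k) = (P 0 \<and> P 1 \<and> P 2 \<and> P 3 \<and> P 4 \<and> P 5 \<and> P 6 \<and> P 7 \<and> P 8 \<and> P 9)"
proof -
  have "(\<forall>k<10::nat. P k) = (\<forall>k\<in>{..<10::nat}. P k)" by auto
  also have "\<dots> = (P 0 \<and> P 1 \<and> P 2 \<and> P 3 \<and> P 4 \<and> P 5 \<and> P 6 \<and> P 7 \<and> P 8 \<and> P 9)"
    unfolding L10 by simp
  finally show ?thesis .
qed

lemma sum10: "(\<Sum>i<10::nat. f i) = f 0 + f 1 + f 2 + f 3 + f 4 + f 5 + f 6 + f 7 + f 8 + (f 9::'a::comm_monoid_add)"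
  by (simp add: eval_nat_numeral ac_simps)

definition UL :: "(complex^3) list" where
  "UL = [vector[1,0,0], vector[0,1,0], vector[0,0,1], vector[1,1,0], vector[1,-1,0],
         vector[1,0,1], vector[1,0,-1], vector[0,1,1], vector[0,1,-1], vector[1,1,1]]"
definition RnL :: "complex list list" where
  "RnL = [[(1), (0), (0), (8/5), (8/5), (8/5), (8/5), (0), (0), (11/5)],
    [(0), (1), (0), (8/5), (-8/5), (0), (0), (8/5), (8/5), (11/5)],
    [(0), (0), (1), (0), (0), (8/5), (-8/5), (8/5), (-8/5), (11/5)],
    [(8/5), (8/5), (0), (8), (0), (14/5), (14/5), (14/5), (14/5), (52/5)],
    [(8/5), (-8/5), (0), (0), (8), (14/5), (14/5), (-14/5), (-14/5), (0)],
    [(8/5), (0), (8/5), (14/5), (14/5), (8), (0), (14/5), (-14/5), (52/5)],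
    [(8/5), (0), (-8/5), (14/5), (14/5), (0), (8), (-14/5), (14/5), (0)],
    [(0), (8/5), (8/5), (14/5), (-14/5), (14/5), (-14/5), (8), (0), (52/5)],
    [(0), (8/5), (-8/5), (14/5), (-14/5), (-14/5), (14/5), (0), (8), (0)],
    [(11/5), (11/5), (11/5), (52/5), (0), (52/5), (0), (52/5), (0), (27)]]"
definition RiL :: "complex list list" where
  "RiL = [[(125/28), (5/12), (5/12), (-25/28), (-10/21), (-25/28), (-10/21), (-5/12), (0), (5/12)],
    [(5/12), (125/28), (5/12), (-25/28), (10/21), (-5/12), (0), (-25/28), (-10/21), (5/12)],
    [(5/12), (5/12), (125/28), (-5/12), (0), (-25/28), (10/21), (-25/28), (10/21), (5/12)],
    [(-25/28), (-25/28), (-5/12), (65/84), (0), (65/168), (-5/168), (65/168), (-5/168), (-5/12)],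
    [(-10/21), (10/21), (0), (0), (5/14), (-5/168), (-5/168), (5/168), (5/168), (0)],
    [(-25/28), (-5/12), (-25/28), (65/168), (-5/168), (65/84), (0), (65/168), (5/168), (-5/12)],
    [(-10/21), (0), (10/21), (-5/168), (-5/168), (0), (5/14), (5/168), (-5/168), (0)],
    [(-5/12), (-25/28), (-25/28), (65/168), (5/168), (65/168), (5/168), (65/84), (0), (-5/12)],
    [(0), (-10/21), (10/21), (-5/168), (5/168), (5/168), (-5/168), (0), (5/14), (0)],
    [(5/12), (5/12), (5/12), (-5/12), (0), (-5/12), (0), (-5/12), (0), (5/12)]]"

lemma Rval: "\<forall>k<10. \<forall>m<10. Rf (UL!k) (UL!m) = RnL!k!m"
  unfolding all10 by (simp add: UL_def RnL_def Rf_def lfv vector_3)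

lemma RRinv: "\<forall>k<10. \<forall>p<10. (\<Sum>m<10. RnL!k!m * RiL!m!p) = (if k = p then 1 else 0)"
  unfolding all10 sum10 by (simp add: RnL_def RiL_def)



definition Cf :: "complex^3 \<Rightarrow> complex^3 \<Rightarrow> complex" where
  "Cf a x = 7*(lf a x)^3 - 3*lf a a * lf x x * lf a x"

lemma lower10:
  fixes b :: "nat \<Rightarrow> complex^3"
  assumes H: "\<forall>x. (lf x x)^3 = (\<Sum>j<10. (lf (b j) x)^6)"
  shows False
proof -
  define Y where "Y k j = (lf (UL!k) (b j))^3" for k j
  have YY: "(\<Sum>j<10. Y k j * Y m j) = RnL!k!m" if "k < 10" "m < 10" for k m
    using star[OF H, of "UL!k" "UL!m"] Rval that unfolding Y_def by simp
  define Z where "Z j p = (\<Sum>m<10. Y m j * RiL!m!p)" for j p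
  have YZ: "\<forall>k<10. \<forall>p<10. (\<Sum>j<10. Y k j * Z j p) = (if k = p then 1 else 0)"
  proof (intro allI impI)
    fix k p :: nat assume k: "k < 10" and p: "p < 10"
    have "(\<Sum>j<10. Y k j * Z j p) = (\<Sum>j<10. \<Sum>m<10. Y k j * Y m j * RiL!m!p)"
      unfolding Z_def by (simp add: sum_distrib_left mult.assoc)
    also have "\<dots> = (\<Sum>m<10. \<Sum>j<10. Y k j * Y m j * RiL!m!p)" by (rule sum.swap)
    also have "\<dots> = (\<Sum>m<10. (\<Sum>j<10. Y k j * Y m j) * RiL!m!p)" by (simp add: sum_distrib_right)
    also have "\<dots> = (\<Sum>m<10. RnL!k!m * RiL!m!p)" by (rule sum.cong) (simp_all add: YY k)
    also have "\<dots> = (if k = p then 1 else 0)" using RRinv k p by simp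
    finally show "(\<Sum>j<10. Y k j * Z j p) = (if k = p then 1 else 0)" .
  qed
  have ZY: "\<forall>i<10. \<forall>k<10. (\<Sum>j<10. Z i j * Y j k) = (if i = k then 1 else 0)"
    by (rule square_inv[OF YZ])
  have ker: "w p = 0" if w: "\<forall>k<10. (\<Sum>j<10. Y k j * w j) = 0" and p: "p < 10" for w p
  proof -
    have "w p = (\<Sum>j<10. if p = j then w j else 0)"
      using p by (simp add: sum.delta)
    also have "\<dots> = (\<Sum>j<10. (\<Sum>k<10. Z p k * Y k j) * w j)"
      by (rule sum.cong) (simp_all add: ZY p)
    also have "\<dots> = (\<Sum>k<10. Z p k * (\<Sum>j<10. Y k j * w j))"
    proof -
      have "(\<Sum>j<10. (\<Sum>k<10. Z p k * Y k j) * w j) = (\<Sum>j<10. \<Sum>k<10. Z p k * Y k j * w j)"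
        by (simp add: sum_distrib_right)
      also have "\<dots> = (\<Sum>k<10. \<Sum>j<10. Z p k * Y k j * w j)" by (rule sum.swap)
      also have "\<dots> = (\<Sum>k<10. Z p k * (\<Sum>j<10. Y k j * w j))" by (simp add: sum_distrib_left mult.assoc)
      finally show ?thesis .
    qed
    also have "\<dots> = 0" using w by simp
    finally show ?thesis .
  qed
  have lag: "Cf (b i) (b j) = (if j = i then 14/5 else 0)" if i: "i < 10" and j: "j < 10" for i j
  proof -
    define w where "w j = Cf (b i) (b j) - (if j = i then 14/5 else 0)" for j
    have "\<forall>k<10. (\<Sum>j<10. Y k j * w j) = 0"
    proof (intro allI impI)
      fix k :: nat assume k: "k < 10"
      have "(\<Sum>j<10. Y k j * w j) = (\<Sum>j<10. Cf (b i) (b j) * (lf (UL!k) (b j))^3)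
          - (\<Sum>j<10. if j = i then 14/5 * (lf (UL!k) (b j))^3 else 0)"
      proof -
        have "Y k j * w j = Cf (b i) (b j) * (lf (UL!k) (b j))^3 - (if j = i then 14/5 * (lf (UL!k) (b j))^3 else 0)" for j
          by (simp add: w_def Y_def algebra_simps)
        then show ?thesis by (simp only: sum_subtractf)
      qed
      also have "\<dots> = 14/5 * (lf (UL!k) (b i))^3 - 14/5 * (lf (UL!k) (b i))^3"
        using dstar[OF H, of "b i" "UL!k"] i unfolding Cf_def by (simp add: sum.delta)
      finally show "(\<Sum>j<10. Y k j * w j) = 0" by simp
    qed
    from ker[OF this j] show ?thesis unfolding w_def by simp
  qed
  define n where "n i = lf (b i) (b i)" for i
  have n3: "(n i)^3 = 7/10" if "i < 10" for i
  proof -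
    have "Cf (b i) (b i) = 4 * (n i)^3" unfolding Cf_def n_def by (simp add: power3_eq_cube)
    then show ?thesis using lag[OF that that] by (simp add: algebra_simps)
  qed
  have g6: "(lf (b j) (b 0))^6 = 0 \<or> (lf (b j) (b 0))^6 = 27/700" if j: "j < 10" "j \<noteq> 0" for j
  proof -
    define g where "g = lf (b 0) (b j)"
    have "lf (b j) (b 0) = g" unfolding g_def by (rule lf_comm)
    moreover have "g * (7*g^2 - 3 * n 0 * n j) = 0"
      using lag[of 0 j] j unfolding Cf_def g_def n_def by (simp add: algebra_simps power2_eq_square power3_eq_cube)
    then have "g = 0 \<or> 7*g^2 = 3 * n 0 * n j" by auto
    moreover have "(3 * n 0 * n j)^3 = 27 * (7/10) * (7/10)"
    proof -
      have "(3 * n 0 * n j)^3 = 27 * (n 0)^3 * (n j)^3" by (simp add: power_mult_distrib)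
      also have "\<dots> = 27 * (7/10) * (7/10)" using n3[of 0] n3[of j] j by (simp only:)
      finally show ?thesis .
    qed
    ultimately show ?thesis
    proof (elim disjE conjE)
      assume "lf (b j) (b 0) = g" "g = 0" then show ?thesis by simp
    next
      assume a: "lf (b j) (b 0) = g" "7*g^2 = 3 * n 0 * n j" and c: "(3 * n 0 * n j)^3 = 27 * (7/10) * (7/10)"
      have "343 * g^6 = (7*g^2)^3" by (simp add: power_mult_distrib flip: power_mult)
      also have "\<dots> = 27 * (7/10) * (7/10)" using a c by simp
      finally have X: "343 * g^6 = 27 * (7/10) * (7/10)" .
      have "g^6 = (343 * g^6)/343" by simp
      also have "\<dots> = 27 * (7/10) * (7/10) / 343" by (simp only: X)
      also have "\<dots> = 27/700" by simp
      finally have "g^6 = 27/700" .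
      then show ?thesis using a by simp
    qed
  qed
  define c where "c j = (if (lf (b j) (b 0))^6 = 0 then 0 else 1::nat)" for j
  have T: "(lf (b j) (b 0))^6 = 27/700 * of_nat (c j)" if "j < 10" "j \<noteq> 0" for j
    using g6[OF that] unfolding c_def by auto
  have "(n 0)^3 = (\<Sum>j<10. (lf (b j) (b 0))^6)" using H unfolding n_def by simp
  also have "\<dots> = (n 0)^6 + 27/700 * of_nat (c 1 + c 2 + c 3 + c 4 + c 5 + c 6 + c 7 + c 8 + c 9)"
    unfolding sum10 by (simp add: T n_def power2_eq_square algebra_simps)
  finally have E: "(n 0)^3 = (n 0)^6 + 27/700 * of_nat (c 1 + c 2 + c 3 + c 4 + c 5 + c 6 + c 7 + c 8 + c 9)" .
  have n6: "(n 0)^6 = 49/100"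
  proof -
    have "(n 0)^6 = ((n 0)^3)^2" by (simp flip: power_mult)
    also have "\<dots> = (7/10)^2" using n3[of 0] by (simp only:)
    also have "\<dots> = 49/100" by (simp add: power2_eq_square)
    finally show ?thesis .
  qed
  define N where "N = c 1 + c 2 + c 3 + c 4 + c 5 + c 6 + c 7 + c 8 + c 9"
  have "(7/10::complex) = 49/100 + 27/700 * of_nat N" using E n6 n3[of 0] unfolding N_def by simp
  then have "of_nat (27 * N) = (of_nat 147 :: complex)" by (simp add: field_simps)
  then have "27 * N = 147" by (simp only: of_nat_eq_iff)
  then show False by presburger
qed



definition bil :: "complex^3^3 \<Rightarrow> complex^3 \<Rightarrow> complex^3 \<Rightarrow> complex" where
  "bil A u w = lf u (A *v w)"

lemma bil3: "bil A u w = u$1*(A$1$1*w$1 + A$1$2*w$2 + A$1$3*w$3) + u$2*(A$2$1*w$1 + A$2$2*w$2 + A$2$3*w$3)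
   + u$3*(A$3$1*w$1 + A$3$2*w$2 + A$3$3*w$3)"
  by (simp add: bil_def lf3 matrix_vector_mult_def sum_3)

lemma bil_add1: "bil A (u + v) w = bil A u w + bil A v w" by (simp add: bil3 algebra_simps)
lemma bil_add2: "bil A w (u + v) = bil A w u + bil A w v" by (simp add: bil3 algebra_simps)
lemma bil_diff1: "bil A (u - v) w = bil A u w - bil A v w" by (simp add: bil3 algebra_simps)
lemma bil_diff2: "bil A w (u - v) = bil A w u - bil A w v" by (simp add: bil3 algebra_simps)
lemma bil_sm1: "bil A (c *s u) w = c * bil A u w" by (simp add: bil3 algebra_simps)
lemma bil_sm2: "bil A w (c *s u) = c * bil A w u" by (simp add: bil3 algebra_simps)

lemma bil_sym:
  assumes "transpose A = A"
  shows "bil A u w = bil A w u"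
proof -
  have s: "A $ i $ j = A $ j $ i" for i j
    using arg_cong[OF assms, of "\<lambda>M. M $ i $ j"] by (simp add: transpose_def)
  show ?thesis using s[of 1 2] s[of 1 3] s[of 2 3] by (simp add: bil3 algebra_simps)
qed

lemma qf_bil: "quadratic_form A x = bil A x x"
  by (simp add: quadratic_form_def bil3 sum_3 algebra_simps)

lemma lf_transpose: "lf u (N *v w) = lf (transpose N *v u) w"
  by (simp add: lf3 matrix_vector_mult_def sum_3 transpose_def algebra_simps)

lemma rank2_poly:
  fixes g1 g2 g3 h1 h2 h3 :: complex
  shows "(g1*g1 + h1*h1) * (g2*g2 + h2*h2) * (g3*g3 + h3*h3) + (g1*g2 + h1*h2) * (g2*g3 + h2*h3) * (g3*g1 + h3*h1) + (g1*g3 + h1*h3) * (g2*g1 + h2*h1) * (g3*g2 + h3*h2) - (g1*g1 + h1*h1) * (g2*g3 + h2*h3) * (g3*g2 + h3*h2) - (g1*g2 + h1*h2) * (g2*g1 + h2*h1) * (g3*g3 + h3*h3) - (g1*g3 + h1*h3) * (g2*g2 + h2*h2) * (g3*g1 + h3*h1) = 0"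
  by algebra

lemma detzero:
  assumes "\<forall>u w. bil A u w = lf u g * lf w g + lf u h * lf w h"
  shows "det A = 0"
proof -
  define e :: "nat \<Rightarrow> complex^3" where "e k = (if k = 1 then vector [1,0,0] else if k = 2 then vector [0,1,0] else vector [0,0,1])" for k
  have "A$1$1 = g$1*g$1 + h$1*h$1" "A$1$2 = g$1*g$2 + h$1*h$2" "A$1$3 = g$1*g$3 + h$1*h$3"
       "A$2$1 = g$2*g$1 + h$2*h$1" "A$2$2 = g$2*g$2 + h$2*h$2" "A$2$3 = g$2*g$3 + h$2*h$3"
       "A$3$1 = g$3*g$1 + h$3*h$1" "A$3$2 = g$3*g$2 + h$3*h$2" "A$3$3 = g$3*g$3 + h$3*h$3"
    using assms[rule_format, of "e 1" "e 1"] assms[rule_format, of "e 1" "e 2"] assms[rule_format, of "e 1" "e 3"]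
      assms[rule_format, of "e 2" "e 1"] assms[rule_format, of "e 2" "e 2"] assms[rule_format, of "e 2" "e 3"]
      assms[rule_format, of "e 3" "e 1"] assms[rule_format, of "e 3" "e 2"] assms[rule_format, of "e 3" "e 3"]
    by (simp_all add: e_def bil3 lfv vector_3)
  then show ?thesis by (simp only: det_3) (rule rank2_poly)
qed

lemma step:
  assumes sym: "transpose A = A" and d: "det A \<noteq> 0"
    and Padd: "\<forall>x y. P (x + y) = P x + P y"
    and dec: "\<forall>u w. bil A u w = bil A (P u) (P w) + lf u g * lf w g + lf u h * lf w h"
  shows "\<exists>x. bil A (P x) (P x) \<noteq> 0"
proof (rule ccontr)
  assume "\<not> ?thesis"
  then have z: "bil A (P x) (P x) = 0" for x by auto
  have Z: "bil A (P u) (P w) = 0" for u w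
  proof -
    have "0 = bil A (P (u + w)) (P (u + w))" using z by simp
    also have "\<dots> = bil A (P u) (P u) + 2 * bil A (P u) (P w) + bil A (P w) (P w)"
      using Padd bil_sym[OF sym, of "P w" "P u"] by (simp add: bil_add1 bil_add2)
    finally show ?thesis using z by simp
  qed
  have "\<forall>u w. bil A u w = lf u g * lf w g + lf u h * lf w h"
  proof (intro allI)
    fix u w
    show "bil A u w = lf u g * lf w g + lf u h * lf w h"
      using dec[rule_format, of u w] Z[of u w] by simp
  qed
  then have "det A = 0" by (rule detzero)
  with d show False by simp
qed

lemma normalize:
  assumes "bil A v v \<noteq> 0"
  shows "\<exists>c. bil A (c *s v) (c *s v) = 1"
proof -
  define c where "c = 1 / csqrt (bil A v v)"
  have "bil A (c *s v) (c *s v) = c^2 * bil A v v" by (simp add: bil_sm1 bil_sm2 power2_eq_square)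
  also have "\<dots> = 1" using assms unfolding c_def power_divide power2_csqrt by simp
  finally show ?thesis by blast
qed


lemma lf_zero2: "lf x 0 = 0" by (simp add: lf3)

lemma factor:
  assumes sym: "transpose A = A" and d: "det A \<noteq> 0"
  shows "\<exists>M N. (\<forall>x. quadratic_form A x = lf (M *v x) (M *v x)) \<and> (\<forall>y. M *v (N *v y) = y)"
proof -
  note bs = bil_sym[OF sym]
  have bA: "lf u (A *v f) = bil A u f" for u f by (simp add: bil_def)
  obtain x1 where "bil A x1 x1 \<noteq> 0"
    using step[OF sym d, of "\<lambda>x. x" 0 0] by (auto simp: lf_zero2)
  then obtain c1 where "bil A (c1 *s x1) (c1 *s x1) = 1" using normalize by blast
  define f1 where "f1 = c1 *s x1"
  have f11: "bil A f1 f1 = 1" using \<open>bil A (c1 *s x1) (c1 *s x1) = 1\<close> unfolding f1_def .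
  define P2 where "P2 x = x - bil A x f1 *s f1" for x
  have P2add: "\<forall>x y. P2 (x + y) = P2 x + P2 y"
    by (simp add: P2_def bil_add1 vec_eq_iff algebra_simps)
  have dec2: "\<forall>u w. bil A u w = bil A (P2 u) (P2 w) + lf u (A *v f1) * lf w (A *v f1) + lf u 0 * lf w 0"
  proof (intro allI)
    fix u w
    have s1: "bil A f1 w = bil A w f1" by (rule bs)
    show "bil A u w = bil A (P2 u) (P2 w) + lf u (A *v f1) * lf w (A *v f1) + lf u 0 * lf w 0"
      by (simp add: P2_def bA lf_zero2 bil_diff1 bil_diff2 bil_sm1 bil_sm2 f11 s1 algebra_simps)
  qed
  obtain x2 where "bil A (P2 x2) (P2 x2) \<noteq> 0" using step[OF sym d P2add dec2] by blast
  then obtain c2 where "bil A (c2 *s P2 x2) (c2 *s P2 x2) = 1" using normalize by blast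
  define f2 where "f2 = c2 *s P2 x2"
  have f22: "bil A f2 f2 = 1" using \<open>bil A (c2 *s P2 x2) (c2 *s P2 x2) = 1\<close> unfolding f2_def .
  have f21: "bil A f2 f1 = 0"
    by (simp add: f2_def P2_def bil_diff1 bil_sm1 f11)
  have f12: "bil A f1 f2 = 0" using f21 bs by simp
  define P3 where "P3 x = x - bil A x f1 *s f1 - bil A x f2 *s f2" for x
  have P3add: "\<forall>x y. P3 (x + y) = P3 x + P3 y"
    by (simp add: P3_def bil_add1 vec_eq_iff algebra_simps)
  have dec3: "\<forall>u w. bil A u w = bil A (P3 u) (P3 w) + lf u (A *v f1) * lf w (A *v f1) + lf u (A *v f2) * lf w (A *v f2)"
  proof (intro allI)
    fix u w
    have s1: "bil A f1 w = bil A w f1" by (rule bs)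
    have s2: "bil A f2 w = bil A w f2" by (rule bs)
    show "bil A u w = bil A (P3 u) (P3 w) + lf u (A *v f1) * lf w (A *v f1) + lf u (A *v f2) * lf w (A *v f2)"
      by (simp add: P3_def bA bil_diff1 bil_diff2 bil_add1 bil_add2 bil_sm1 bil_sm2 f11 f22 f12 f21 s1 s2 algebra_simps)
  qed
  obtain x3 where "bil A (P3 x3) (P3 x3) \<noteq> 0" using step[OF sym d P3add dec3] by blast
  then obtain c3 where "bil A (c3 *s P3 x3) (c3 *s P3 x3) = 1" using normalize by blast
  define f3 where "f3 = c3 *s P3 x3"
  have f33: "bil A f3 f3 = 1" using \<open>bil A (c3 *s P3 x3) (c3 *s P3 x3) = 1\<close> unfolding f3_def .
  have f31: "bil A f3 f1 = 0"
    by (simp add: f3_def P3_def bil_diff1 bil_sm1 f11 f21)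
  have f32: "bil A f3 f2 = 0"
    by (simp add: f3_def P3_def bil_diff1 bil_sm1 f22 f12)
  have f13: "bil A f1 f3 = 0" using f31 bs by simp
  have f23: "bil A f2 f3 = 0" using f32 bs by simp
  define F :: "3 \<Rightarrow> complex^3" where "F k = (if k = 1 then f1 else if k = 2 then f2 else f3)" for k
  define Fm :: "complex^3^3" where "Fm = (\<chi> i k. F k $ i)"
  have F123: "F 1 = f1" "F 2 = f2" "F 3 = f3" by (simp_all add: F_def)
  have Fv: "Fm *v y = y$1 *s f1 + y$2 *s f2 + y$3 *s f3" for y
    by (simp add: Fm_def matrix_vector_mult_def vec_eq_iff sum_3 F123 algebra_simps)
  have Fbil: "bil A (Fm *v y) (Fm *v y) = lf y y" for y
    unfolding Fv by (simp add: bil_add1 bil_add2 bil_sm1 bil_sm2 f11 f22 f33 f12 f21 f13 f31 f23 f32 lf3 algebra_simps)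
  have entry: "(transpose Fm ** (A ** Fm)) $ k $ l = bil A (F k) (F l)" for k l
    by (simp add: Fm_def transpose_def matrix_matrix_mult_def bil_def linear_form_def matrix_vector_mult_def
        sum_distrib_left mult.assoc)
  have "transpose Fm ** (A ** Fm) = mat 1"
    unfolding vec_eq_iff forall_3 entry by (simp add: F123 f11 f22 f33 f12 f21 f13 f31 f23 f32 mat_def)
  then have "det (transpose Fm ** (A ** Fm)) = 1" by simp
  then have "det Fm * (det A * det Fm) = 1" by (simp add: det_mul)
  then have "det Fm \<noteq> 0" by auto
  then have "invertible Fm" by (simp add: invertible_det_nz)
  then obtain M where M1: "Fm ** M = mat 1" and M2: "M ** Fm = mat 1" unfolding invertible_def by blast
  show ?thesis
  proof (intro exI conjI allI)
    fix x
    have "x = Fm *v (M *v x)" by (simp add: matrix_vector_mul_assoc M1)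
    then have "quadratic_form A x = bil A (Fm *v (M *v x)) (Fm *v (M *v x))" by (simp add: qf_bil)
    then show "quadratic_form A x = lf (M *v x) (M *v x)" by (simp add: Fbil)
  next
    fix y show "M *v (Fm *v y) = y" by (simp add: matrix_vector_mul_assoc M2)
  qed
qed


lemma sum11: "(\<Sum>i<11::nat. f i) = f 0 + f 1 + f 2 + f 3 + f 4 + f 5 + f 6 + f 7 + f 8 + f 9 + (f 10::'a::comm_monoid_add)"
  by (simp add: eval_nat_numeral ac_simps)

lemma ident11:
  fixes x y z :: complex
  shows "(3*x^2+y^2+z^2)^3 = 14*x^6 + 7/10*y^6 + 7/10*z^6
    + 1/20*(x+y+z)^6 + 1/20*(x+y-z)^6 + 1/20*(x-y+z)^6 + 1/20*(x-y-z)^6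
    + 1/20*(2*x+y)^6 + 1/20*(2*x-y)^6 + 1/20*(2*x+z)^6 + 1/20*(2*x-z)^6"
  by algebra

lemma upper_std: "\<exists>l::nat \<Rightarrow> complex^3. \<forall>y. (linear_form y y)^3 = (\<Sum>i<11. (linear_form (l i) y)^6)"
proof -
  define s :: complex where "s = complex_of_real (sqrt 3)"
  define a :: complex where "a = complex_of_real (root 6 14)"
  define b :: complex where "b = complex_of_real (root 6 (7/10))"
  define c :: complex where "c = complex_of_real (root 6 (1/20))"
  have s2: "s^2 = 3" unfolding s_def by (simp flip: of_real_power)
  have s0: "s \<noteq> 0" using s2 by auto
  have a6: "a^6 = 14" unfolding a_def by (simp add: real_root_pow_pos2 flip: of_real_power)
  have b6: "b^6 = 7/10" unfolding b_def by (simp add: real_root_pow_pos2 flip: of_real_power)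
  have c6: "c^6 = 1/20" unfolding c_def by (simp add: real_root_pow_pos2 flip: of_real_power)
  define L :: "(complex^3) list" where "L = [vector [a/s,0,0], vector[0,b,0], vector[0,0,b],
     vector[c/s, c, c], vector[c/s, c, -c], vector[c/s,-c,c], vector[c/s,-c,-c],
     vector[2*c/s, c, 0], vector[2*c/s,-c,0], vector[2*c/s,0,c], vector[2*c/s,0,-c]]"
  show ?thesis
  proof (intro exI allI)
    fix y :: "complex^3"
    define x where "x = y$1/s"
    have yx: "y$1 = s*x" using s0 unfolding x_def by simp
    have e: "(linear_form y y)^3 = (3*x^2 + (y$2)^2 + (y$3)^2)^3"
      by (simp add: lf3 yx power2_eq_square s2[unfolded power2_eq_square, symmetric] algebra_simps)
    have t0: "(linear_form (L!0) y)^6 = a^6*(x)^6"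
    proof -
      have "linear_form (L!0) y = a*(x)" by (simp add: L_def lfv yx s0 field_simps)
      then show ?thesis by (simp add: power_mult_distrib)
    qed
    have t1: "(linear_form (L!1) y)^6 = b^6*(y$2)^6"
    proof -
      have "linear_form (L!1) y = b*(y$2)" by (simp add: L_def lfv yx s0 field_simps)
      then show ?thesis by (simp add: power_mult_distrib)
    qed
    have t2: "(linear_form (L!2) y)^6 = b^6*(y$3)^6"
    proof -
      have "linear_form (L!2) y = b*(y$3)" by (simp add: L_def lfv yx s0 field_simps)
      then show ?thesis by (simp add: power_mult_distrib)
    qed
    have t3: "(linear_form (L!3) y)^6 = c^6*(x+y$2+y$3)^6"
    proof -
      have "linear_form (L!3) y = c*(x+y$2+y$3)" by (simp add: L_def lfv yx s0 field_simps)
      then show ?thesis by (simp add: power_mult_distrib)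
    qed
    have t4: "(linear_form (L!4) y)^6 = c^6*(x+y$2-y$3)^6"
    proof -
      have "linear_form (L!4) y = c*(x+y$2-y$3)" by (simp add: L_def lfv yx s0 field_simps)
      then show ?thesis by (simp add: power_mult_distrib)
    qed
    have t5: "(linear_form (L!5) y)^6 = c^6*(x-y$2+y$3)^6"
    proof -
      have "linear_form (L!5) y = c*(x-y$2+y$3)" by (simp add: L_def lfv yx s0 field_simps)
      then show ?thesis by (simp add: power_mult_distrib)
    qed
    have t6: "(linear_form (L!6) y)^6 = c^6*(x-y$2-y$3)^6"
    proof -
      have "linear_form (L!6) y = c*(x-y$2-y$3)" by (simp add: L_def lfv yx s0 field_simps)
      then show ?thesis by (simp add: power_mult_distrib)
    qed
    have t7: "(linear_form (L!7) y)^6 = c^6*(2*x+y$2)^6"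
    proof -
      have "linear_form (L!7) y = c*(2*x+y$2)" by (simp add: L_def lfv yx s0 field_simps)
      then show ?thesis by (simp add: power_mult_distrib)
    qed
    have t8: "(linear_form (L!8) y)^6 = c^6*(2*x-y$2)^6"
    proof -
      have "linear_form (L!8) y = c*(2*x-y$2)" by (simp add: L_def lfv yx s0 field_simps)
      then show ?thesis by (simp add: power_mult_distrib)
    qed
    have t9: "(linear_form (L!9) y)^6 = c^6*(2*x+y$3)^6"
    proof -
      have "linear_form (L!9) y = c*(2*x+y$3)" by (simp add: L_def lfv yx s0 field_simps)
      then show ?thesis by (simp add: power_mult_distrib)
    qed
    have t10: "(linear_form (L!10) y)^6 = c^6*(2*x-y$3)^6"
    proof -
      have "linear_form (L!10) y = c*(2*x-y$3)" by (simp add: L_def lfv yx s0 field_simps)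
      then show ?thesis by (simp add: power_mult_distrib)
    qed
    have S: "(\<Sum>i<11. (linear_form (L!i) y)^6) = a^6*x^6 + b^6*(y$2)^6 + b^6*(y$3)^6 + c^6*(x+y$2+y$3)^6 + c^6*(x+y$2-y$3)^6
      + c^6*(x-y$2+y$3)^6 + c^6*(x-y$2-y$3)^6 + c^6*(2*x+y$2)^6 + c^6*(2*x-y$2)^6 + c^6*(2*x+y$3)^6
      + c^6*(2*x-y$3)^6"
      unfolding sum11 t0 t1 t2 t3 t4 t5 t6 t7 t8 t9 t10 ..
    show "(linear_form y y)^3 = (\<Sum>i<11. (linear_form (L!i) y)^6)"
      by (simp only: e ident11 S a6 b6 c6)
  qed
qed

lemma lower_std:
  fixes l :: "nat \<Rightarrow> complex^3"
  assumes r: "r < 11" and H: "\<forall>x. (lf x x)^3 = (\<Sum>i<r. (lf (l i) x)^6)"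
  shows False
proof -
  define b where "b j = (if j < r then l j else 0)" for j
  have "\<forall>x. (lf x x)^3 = (\<Sum>j<10. (lf (b j) x)^6)"
  proof
    fix x
    have "(\<Sum>j<10. (lf (b j) x)^6) = (\<Sum>j<10. if j < r then (lf (l j) x)^6 else 0)"
      by (rule sum.cong) (simp_all add: b_def lf_zero)
    also have "\<dots> = (\<Sum>j\<in>{..<10} \<inter> {j. j < r}. (lf (l j) x)^6)"
      by (simp add: sum.inter_restrict)
    also have "{..<10} \<inter> {j. j < r} = {..<r}" using r by auto
    finally show "(lf x x)^3 = (\<Sum>j<10. (lf (b j) x)^6)" using H by simp
  qed
  then show False by (rule lower10)
qed

theorem corollary4p19:
  fixes A :: "complex^3^3"
  assumes "transpose A = A"
    and "det A \<noteq> 0"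
  shows "waring_rank 6 (\<lambda>x. (quadratic_form A x) ^ 3) = 11"
proof -
  obtain M N where qM: "\<forall>x. quadratic_form A x = lf (M *v x) (M *v x)"
    and MN: "\<forall>y. M *v (N *v y) = y"
    using factor[OF assms] by blast
  have up: "\<exists>l::nat \<Rightarrow> complex^3. \<forall>x. (quadratic_form A x)^3 = (\<Sum>i<11. (linear_form (l i) x)^6)"
  proof -
    obtain l0 :: "nat \<Rightarrow> complex^3" where l0: "\<forall>y. (lf y y)^3 = (\<Sum>i<11. (lf (l0 i) y)^6)"
      using upper_std by blast
    show ?thesis
    proof (intro exI allI)
      fix x
      have "(quadratic_form A x)^3 = (\<Sum>i<11. (lf (l0 i) (M *v x))^6)" using qM l0 by simp
      also have "\<dots> = (\<Sum>i<11. (lf (transpose M *v l0 i) x)^6)"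
        by (simp only: lf_transpose)
      finally show "(quadratic_form A x)^3 = (\<Sum>i<11. (linear_form (transpose M *v l0 i) x)^6)" .
    qed
  qed
  have low: "11 \<le> r" if ex: "\<exists>l::nat \<Rightarrow> complex^3. \<forall>x. (quadratic_form A x)^3 = (\<Sum>i<r. (linear_form (l i) x)^6)" for r
  proof (rule ccontr)
    assume "\<not> 11 \<le> r"
    then have r: "r < 11" by simp
    obtain l :: "nat \<Rightarrow> complex^3" where l: "\<forall>x. (quadratic_form A x)^3 = (\<Sum>i<r. (lf (l i) x)^6)"
      using ex by blast
    have "\<forall>y. (lf y y)^3 = (\<Sum>i<r. (lf (transpose N *v l i) y)^6)"
    proof
      fix y
      have "(lf y y)^3 = (quadratic_form A (N *v y))^3" using qM MN by simp
      also have "\<dots> = (\<Sum>i<r. (lf (l i) (N *v y))^6)" using l by simp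
      also have "\<dots> = (\<Sum>i<r. (lf (transpose N *v l i) y)^6)" by (simp only: lf_transpose)
      finally show "(lf y y)^3 = (\<Sum>i<r. (lf (transpose N *v l i) y)^6)" .
    qed
    then show False by (rule lower_std[OF r])
  qed
  show ?thesis
    unfolding waring_rank_def
    by (rule Least_equality) (use up low in auto)
qed


end
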